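(* Let $f:\mathbb{R}^d\to\mathbb{R}$ be continuous (with respect to the Euclidean topology). For any distributions $p_1,p_2$ on $\mathbb{R}^d$ with $W_1(p_1,p_2)<\eta$, there exists a distribution $r$ with $r\in\mathbb{F}(p_1,\eta,f)\cap\mathbb{F}(p_2,\eta,f)$, i.e. $r$ is an $\eta$-friendly perturbation of both $p_1$ and $p_2$ for $f$.
   Context: $W_1(p,q)=\inf_{\pi\in\Pi(p,q)}\int\|x-y\|_2\,d\pi(x,y)$, where $\Pi(p,q)$ is the set of couplings. Friendly perturbation: for a distribution $p$, $\eta\ge0$ and $f:\mathbb{R}^d\to\mathbb{R}$, $r\in\mathbb{F}(p,\eta,f)$ means there is a coupling $\pi_{X,Y}$ of $X\sim p$ and $Y\sim r$ with $\mathbb{E}_\pi\|X-Y\|_2\le\eta$ and such that $f(Y)$ lies between $f(X)$ and $\mathbb{E}_r[f(Y)]$ almost surely. *)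

theory Defs
  imports "HOL-Probability.Probability"
begin

definition distribution :: "'a::euclidean_space measure \<Rightarrow> bool" where
  "distribution p \<longleftrightarrow> prob_space p \<and> sets p = sets (borel :: 'a measure)"

definition couplings :: "'a::euclidean_space measure \<Rightarrow> 'a measure \<Rightarrow> ('a \<times> 'a) measure set" where
  "couplings p q = {\<pi>. prob_space \<pi> \<and> sets \<pi> = sets (borel \<Otimes>\<^sub>M borel)
       \<and> distr \<pi> borel fst = p \<and> distr \<pi> borel snd = q}"

definition transport_cost :: "('a::euclidean_space \<times> 'a) measure \<Rightarrow> ennreal" where
  "transport_cost \<pi> = (\<integral>\<^sup>+ z. ennreal (norm (fst z - snd z)) \<partial>\<pi>)"

definition W1 :: "'a::euclidean_space measure \<Rightarrow> 'a measure \<Rightarrow> ennreal" where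
  "W1 p q = (INF \<pi>\<in>couplings p q. transport_cost \<pi>)"

definition between :: "real \<Rightarrow> real \<Rightarrow> real \<Rightarrow> bool" where
  "between y a b \<longleftrightarrow> min a b \<le> y \<and> y \<le> max a b"

definition friendly :: "'a::euclidean_space measure \<Rightarrow> real \<Rightarrow> ('a \<Rightarrow> real) \<Rightarrow> 'a measure \<Rightarrow> bool" where
  "friendly p \<eta> f r \<longleftrightarrow> integrable r f \<and>
     (\<exists>\<pi>\<in>couplings p r. transport_cost \<pi> \<le> ennreal \<eta> \<and>
        (AE z in \<pi>. between (f (snd z)) (f (fst z)) (\<integral>y. f y \<partial>r)))"

end

theory Submission
  imports Defs
begin

primrec bis :: "('a::euclidean_space \<Rightarrow> real) \<Rightarrow> 'a \<Rightarrow> 'a \<Rightarrow> real \<Rightarrow> nat \<Rightarrow> real \<times> real" where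
  "bis f a b w 0 = (0, 1)"
| "bis f a b w (Suc n) = (let l = fst (bis f a b w n); h = snd (bis f a b w n); m = (l + h) / 2 in
     if (f (a + l *\<^sub>R (b - a)) - w) * (f (a + m *\<^sub>R (b - a)) - w) \<le> 0 then (l, m) else (m, h))"

lemma bis_meas:
  fixes f :: "'a::euclidean_space \<Rightarrow> real"
  assumes fc: "continuous_on UNIV f"
    and [measurable]: "a \<in> borel_measurable M" "b \<in> borel_measurable M" "w \<in> borel_measurable M"
  shows "(\<lambda>x. fst (bis f (a x) (b x) (w x) n)) \<in> borel_measurable M \<and> (\<lambda>x. snd (bis f (a x) (b x) (w x) n)) \<in> borel_measurable M"
proof (induction n)
  case 0
  then show ?case by simp
next
  case (Suc n)
  have fm[measurable]: "f \<in> borel_measurable borel" using fc by (rule borel_measurable_continuous_onI)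
  from Suc have [measurable]: "(\<lambda>x. fst (bis f (a x) (b x) (w x) n)) \<in> borel_measurable M" "(\<lambda>x. snd (bis f (a x) (b x) (w x) n)) \<in> borel_measurable M" by auto
  show ?case
    by (simp add: Let_def if_distrib[of fst] if_distrib[of snd] cong del: if_weak_cong)
qed

lemma bis_props:
  fixes f :: "'a::euclidean_space \<Rightarrow> real"
  shows "0 \<le> fst (bis f a b w n) \<and> snd (bis f a b w n) \<le> 1 \<and> snd (bis f a b w n) - fst (bis f a b w n) = 1 / 2 ^ n
     \<and> ((f a - w) * (f b - w) \<le> 0 \<longrightarrow> (f (a + fst (bis f a b w n) *\<^sub>R (b - a)) - w) * (f (a + snd (bis f a b w n) *\<^sub>R (b - a)) - w) \<le> 0)"
proof (induction n)
  case 0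
  then show ?case by (simp add: Let_def)
next
  case (Suc n)
  define l where "l = fst (bis f a b w n)"
  define h where "h = snd (bis f a b w n)"
  define m where "m = (l + h) / 2"
  have e: "bis f a b w (Suc n) = (if (f (a + l *\<^sub>R (b - a)) - w) * (f (a + m *\<^sub>R (b - a)) - w) \<le> 0 then (l, m) else (m, h))"
    by (simp add: l_def h_def m_def Let_def)
  have IH: "0 \<le> l" "h \<le> 1" "h - l = 1 / 2 ^ n" "(f a - w) * (f b - w) \<le> 0 \<Longrightarrow> (f (a + l *\<^sub>R (b - a)) - w) * (f (a + h *\<^sub>R (b - a)) - w) \<le> 0"
    using Suc by (auto simp: l_def h_def)
  have lh: "l \<le> h" using IH(3) by (smt (verit) divide_pos_pos zero_less_power)
  have m1: "m - l = 1 / 2 ^ Suc n" "h - m = 1 / 2 ^ Suc n" using IH(3) by (auto simp: m_def field_simps)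
  have sign: "(B::real) * C \<le> 0" if "A * C \<le> 0" "\<not> A * B \<le> 0" for A B C
    using that by (auto simp: mult_le_0_iff zero_less_mult_iff not_le)
  show ?case
  proof (cases "(f (a + l *\<^sub>R (b - a)) - w) * (f (a + m *\<^sub>R (b - a)) - w) \<le> 0")
    case True
    then show ?thesis unfolding e using IH lh m1 by (simp add: m_def)
  next
    case False
    then show ?thesis unfolding e using IH lh m1 sign[OF _ False] by (simp add: m_def)
  qed
qed

lemma bis_mono: "fst (bis f a b w n) \<le> fst (bis f a b w (Suc n))"
proof -
  have "fst (bis f a b w n) \<le> snd (bis f a b w n)"
    using bis_props[of f a b w n] by (smt (verit) divide_pos_pos zero_less_power)
  then show ?thesis by (simp add: Let_def)
qed


definition hitT :: "('a::euclidean_space \<Rightarrow> real) \<Rightarrow> 'a \<Rightarrow> 'a \<Rightarrow> real \<Rightarrow> real" where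
  "hitT f a b w = lim (\<lambda>n. fst (bis f a b w n))"

definition hit :: "('a::euclidean_space \<Rightarrow> real) \<Rightarrow> 'a \<Rightarrow> 'a \<Rightarrow> real \<Rightarrow> 'a" where
  "hit f a b w = a + hitT f a b w *\<^sub>R (b - a)"

lemma hitT_lim:
  "(\<lambda>n. fst (bis f a b w n)) \<longlonglongrightarrow> hitT f a b w \<and> (\<lambda>n. snd (bis f a b w n)) \<longlonglongrightarrow> hitT f a b w
   \<and> 0 \<le> hitT f a b w \<and> hitT f a b w \<le> 1"
proof -
  have inc: "incseq (\<lambda>n. fst (bis f a b w n))"
    by (rule incseq_SucI) (rule bis_mono)
  have bd: "\<forall>i. fst (bis f a b w i) \<le> 1"
    using bis_props[of f a b w] by (smt (verit) divide_pos_pos zero_less_power)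
  obtain L where L: "(\<lambda>n. fst (bis f a b w n)) \<longlonglongrightarrow> L" "\<forall>i. fst (bis f a b w i) \<le> L"
    using incseq_convergent[OF inc bd] by blast
  have T: "hitT f a b w = L" unfolding hitT_def using L(1) by (rule limI)
  have "(\<lambda>n. fst (bis f a b w n) + 1 / 2 ^ n) \<longlonglongrightarrow> L + 0"
    by (intro tendsto_add L(1) LIMSEQ_divide_realpow_zero) auto
  moreover have "(\<lambda>n. fst (bis f a b w n) + 1 / 2 ^ n) = (\<lambda>n. snd (bis f a b w n))"
    using bis_props[of f a b w] by (auto simp: algebra_simps)
  ultimately have S: "(\<lambda>n. snd (bis f a b w n)) \<longlonglongrightarrow> L" by simp
  have "0 \<le> L" using L(2) bis_props[of f a b w 0] by (metis order.trans)
  moreover have "L \<le> 1"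
    by (rule LIMSEQ_le_const2[OF S]) (use bis_props[of f a b w] in auto)
  ultimately show ?thesis using L(1) S T by simp
qed

lemma hit_meas:
  fixes f :: "'a::euclidean_space \<Rightarrow> real"
  assumes fc: "continuous_on UNIV f"
    and [measurable]: "a \<in> borel_measurable M" "b \<in> borel_measurable M" "w \<in> borel_measurable M"
  shows "(\<lambda>x. hit f (a x) (b x) (w x)) \<in> borel_measurable M"
proof -
  have [measurable]: "(\<lambda>x. hitT f (a x) (b x) (w x)) \<in> borel_measurable M"
    by (rule borel_measurable_LIMSEQ_real[where u="\<lambda>n x. fst (bis f (a x) (b x) (w x) n)"])
       (use hitT_lim bis_meas[OF fc assms(2-4)] in auto)
  show ?thesis unfolding hit_def by measurable
qed

lemma hit_val:
  fixes f :: "'a::euclidean_space \<Rightarrow> real"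
  assumes fc: "continuous_on UNIV f" and bw: "(f a - w) * (f b - w) \<le> 0"
  shows "f (hit f a b w) = w"
proof -
  define g where "g t = f (a + t *\<^sub>R (b - a)) - w" for t
  have "continuous_on UNIV g"
    unfolding g_def by (intro continuous_intros continuous_on_compose2[OF fc]) auto
  then have gc: "isCont g t" for t
    by (simp add: continuous_on_eq_continuous_at)
  have lim: "(\<lambda>n. fst (bis f a b w n)) \<longlonglongrightarrow> hitT f a b w" "(\<lambda>n. snd (bis f a b w n)) \<longlonglongrightarrow> hitT f a b w"
    using hitT_lim by auto
  have "(\<lambda>n. g (fst (bis f a b w n)) * g (snd (bis f a b w n))) \<longlonglongrightarrow> g (hitT f a b w) * g (hitT f a b w)"
    by (intro tendsto_mult isCont_tendsto_compose[OF gc] lim)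
  then have "g (hitT f a b w) * g (hitT f a b w) \<le> 0"
    by (rule LIMSEQ_le_const2) (use bis_props[of f a b w] bw in \<open>auto simp: g_def\<close>)
  then have "g (hitT f a b w) = 0"
    by (metis mult_le_0_iff order_antisym_conv)
  then show ?thesis by (simp add: g_def hit_def)
qed


lemma between_prod: "between w x y \<longleftrightarrow> (x - w) * (y - w) \<le> (0::real)"
  unfolding between_def by (auto simp: mult_le_0_iff min_def max_def)

definition kap :: "real \<Rightarrow> real \<Rightarrow> real \<Rightarrow> real" where
  "kap c u1 u2 = max (min u1 u2) (min c (max u1 u2))"

definition vv :: "real \<Rightarrow> real \<Rightarrow> real \<Rightarrow> real \<Rightarrow> real" where
  "vv c u1 u2 f0 = max (min c (kap c u1 u2)) (min f0 (max c (kap c u1 u2)))"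

definition FF :: "real \<Rightarrow> real \<Rightarrow> real \<Rightarrow> real \<Rightarrow> real \<Rightarrow> real" where
  "FF L c f0 u1 u2 = (if L < \<bar>u1\<bar> \<or> L < \<bar>u2\<bar> then vv c u1 u2 f0 else kap c u1 u2)"

lemma FF_between: "between (FF L c f0 u1 u2) u1 c \<and> between (FF L c f0 u1 u2) u2 c"
  unfolding FF_def vv_def kap_def between_def by (auto simp: min_def max_def)

lemma FF_good: "\<not> (L < \<bar>u1\<bar> \<or> L < \<bar>u2\<bar>) \<Longrightarrow> between (FF L c f0 u1 u2) u1 u2"
  unfolding FF_def vv_def kap_def between_def by (auto simp: min_def max_def)

lemma FF_hull: "between (FF L c f0 u1 u2) u1 u2 \<or> between (FF L c f0 u1 u2) u1 f0 \<or> between (FF L c f0 u1 u2) u2 f0"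
  unfolding FF_def vv_def kap_def between_def by (auto simp: min_def max_def)

lemma FF_bound: "\<bar>FF L c f0 u1 u2\<bar> \<le> \<bar>c\<bar> + \<bar>L\<bar> + \<bar>f0\<bar>"
  unfolding FF_def vv_def kap_def by (auto simp: min_def max_def)

lemma FF_hi: "0 \<le> L \<Longrightarrow> L + \<bar>f0\<bar> \<le> c \<Longrightarrow> FF L c f0 u1 u2 \<le> c"
  unfolding FF_def vv_def kap_def by (auto simp: min_def max_def)

lemma FF_lo: "0 \<le> L \<Longrightarrow> c \<le> - (L + \<bar>f0\<bar>) \<Longrightarrow> c \<le> FF L c f0 u1 u2"
  unfolding FF_def vv_def kap_def by (auto simp: min_def max_def)

lemma min_lip: "\<bar>min a b - min a' b'\<bar> \<le> max \<bar>a - a'\<bar> \<bar>b - b'\<bar>" for a b a' b' :: real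
  by (auto simp: min_def max_def)
lemma max_lip: "\<bar>max a b - max a' b'\<bar> \<le> max \<bar>a - a'\<bar> \<bar>b - b'\<bar>" for a b a' b' :: real
  by (auto simp: min_def max_def)

lemma kap_lip: "\<bar>kap c u1 u2 - kap c' u1 u2\<bar> \<le> \<bar>c - c'\<bar>"
  unfolding kap_def using max_lip[of "min u1 u2" "min c (max u1 u2)" "min u1 u2" "min c' (max u1 u2)"]
     min_lip[of c "max u1 u2" c' "max u1 u2"] by auto

lemma FF_lip: "\<bar>FF L c f0 u1 u2 - FF L c' f0 u1 u2\<bar> \<le> \<bar>c - c'\<bar>"
proof -
  have k: "\<bar>kap c u1 u2 - kap c' u1 u2\<bar> \<le> \<bar>c - c'\<bar>" by (rule kap_lip)
  have lo: "\<bar>min c (kap c u1 u2) - min c' (kap c' u1 u2)\<bar> \<le> \<bar>c - c'\<bar>"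
    using min_lip[of c "kap c u1 u2" c' "kap c' u1 u2"] k by auto
  have hi: "\<bar>max c (kap c u1 u2) - max c' (kap c' u1 u2)\<bar> \<le> \<bar>c - c'\<bar>"
    using max_lip[of c "kap c u1 u2" c' "kap c' u1 u2"] k by auto
  have m: "\<bar>min f0 (max c (kap c u1 u2)) - min f0 (max c' (kap c' u1 u2))\<bar> \<le> \<bar>c - c'\<bar>"
    using min_lip[of f0 "max c (kap c u1 u2)" f0 "max c' (kap c' u1 u2)"] hi by auto
  have v: "\<bar>vv c u1 u2 f0 - vv c' u1 u2 f0\<bar> \<le> \<bar>c - c'\<bar>"
    unfolding vv_def using max_lip[of "min c (kap c u1 u2)" "min f0 (max c (kap c u1 u2))" "min c' (kap c' u1 u2)" "min f0 (max c' (kap c' u1 u2))"] lo m by (meson max.boundedI order_trans)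
  show ?thesis unfolding FF_def using k v by auto
qed

definition sel :: "('a::euclidean_space \<Rightarrow> real) \<Rightarrow> 'a \<Rightarrow> 'a \<Rightarrow> real \<Rightarrow> 'a" where
  "sel f a b w = (if (f a - w) * (f b - w) \<le> 0 then hit f a b w
     else if (f a - w) * (f 0 - w) \<le> 0 then hit f a 0 w else hit f b 0 w)"

lemma sel_val:
  fixes f :: "'a::euclidean_space \<Rightarrow> real"
  assumes fc: "continuous_on UNIV f"
    and h: "between w (f a) (f b) \<or> between w (f a) (f 0) \<or> between w (f b) (f 0)"
  shows "f (sel f a b w) = w"
  using h hit_val[OF fc] unfolding sel_def between_prod by auto

lemma sel_meas:
  fixes f :: "'a::euclidean_space \<Rightarrow> real"
  assumes fc: "continuous_on UNIV f"
    and [measurable]: "a \<in> borel_measurable M" "b \<in> borel_measurable M" "w \<in> borel_measurable M"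
  shows "(\<lambda>x. sel f (a x) (b x) (w x)) \<in> borel_measurable M"
proof -
  have fm[measurable]: "f \<in> borel_measurable borel" using fc by (rule borel_measurable_continuous_onI)
  have [measurable]: "(\<lambda>x. hit f (a x) (b x) (w x)) \<in> borel_measurable M"
     "(\<lambda>x. hit f (a x) 0 (w x)) \<in> borel_measurable M" "(\<lambda>x. hit f (b x) 0 (w x)) \<in> borel_measurable M"
    by (rule hit_meas[OF fc]; measurable)+
  show ?thesis unfolding sel_def by measurable
qed

lemma hit_dist:
  "norm (a - hit f a b w) \<le> norm (a - b)" "norm (b - hit f a b w) \<le> norm (a - b)"
  "norm (x - hit f a 0 w) \<le> norm x + norm a"
proof -
  define T where "T = hitT f a b w"
  have T: "0 \<le> T" "T \<le> 1" using hitT_lim unfolding T_def by auto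
  have "norm (a - hit f a b w) = T * norm (a - b)"
    by (simp add: hit_def T_def[symmetric] norm_minus_commute T(1))
  also have "\<dots> \<le> norm (a - b)" using T by (simp add: mult_left_le_one_le)
  finally show "norm (a - hit f a b w) \<le> norm (a - b)" .
  have "b - hit f a b w = (1 - T) *\<^sub>R (b - a)" by (simp add: hit_def T_def[symmetric] algebra_simps)
  then have "norm (b - hit f a b w) = (1 - T) * norm (a - b)"
    using T by (simp add: norm_minus_commute)
  also have "\<dots> \<le> norm (a - b)" using T by (simp add: mult_left_le_one_le)
  finally show "norm (b - hit f a b w) \<le> norm (a - b)" .
  define S where "S = hitT f a 0 w"
  have S: "0 \<le> S" "S \<le> 1" using hitT_lim unfolding S_def by auto
  have e: "hit f a 0 w = (1 - S) *\<^sub>R a" by (simp add: hit_def S_def[symmetric] algebra_simps)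
  have "norm (x - hit f a 0 w) \<le> norm x + norm (hit f a 0 w)" by (rule norm_triangle_ineq4)
  moreover have "norm (hit f a 0 w) \<le> norm a" unfolding e using S by (simp add: mult_left_le_one_le)
  ultimately show "norm (x - hit f a 0 w) \<le> norm x + norm a" by simp
qed

lemma sel_dist:
  "norm (a - sel f a b w) \<le> norm (a - b) + (if between w (f a) (f b) then 0 else norm a + norm b)"
  "norm (b - sel f a b w) \<le> norm (a - b) + (if between w (f a) (f b) then 0 else norm a + norm b)"
proof -
  have h: "norm (a - hit f a b w) \<le> norm (a - b)" "norm (b - hit f a b w) \<le> norm (a - b)"
    "norm (a - hit f a 0 w) \<le> norm a + norm a" "norm (b - hit f a 0 w) \<le> norm b + norm a"
    "norm (a - hit f b 0 w) \<le> norm a + norm b" "norm (b - hit f b 0 w) \<le> norm b + norm b"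
    by (rule hit_dist)+
  have "0 \<le> norm (a - b)" "norm a \<le> norm b + norm (a - b)" "norm b \<le> norm a + norm (a - b)"
    using norm_triangle_ineq2[of a b] norm_triangle_ineq2[of b a] by (auto simp: norm_minus_commute)
  then show "norm (a - sel f a b w) \<le> norm (a - b) + (if between w (f a) (f b) then 0 else norm a + norm b)"
    "norm (b - sel f a b w) \<le> norm (a - b) + (if between w (f a) (f b) then 0 else norm a + norm b)"
    using h unfolding sel_def between_prod by auto
qed


lemma friendly_from:
  fixes f :: "'a::euclidean_space \<Rightarrow> real" and \<pi> :: "('a \<times> 'a) measure"
  assumes ps: "prob_space \<pi>" and sp: "sets \<pi> = sets (borel \<Otimes>\<^sub>M borel)"
    and [measurable]: "X \<in> borel_measurable \<pi>" "Y \<in> borel_measurable \<pi>" "f \<in> borel_measurable borel"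
    and int: "integrable \<pi> (\<lambda>z. f (Y z))" and ic: "(\<integral>z. f (Y z) \<partial>\<pi>) = c"
    and cost: "(\<integral>\<^sup>+z. ennreal (norm (X z - Y z)) \<partial>\<pi>) \<le> ennreal \<eta>"
    and btw: "\<And>z. between (f (Y z)) (f (X z)) c"
  shows "friendly (distr \<pi> borel X) \<eta> f (distr \<pi> borel Y)"
proof -
  define \<pi>1 where "\<pi>1 = distr \<pi> (borel \<Otimes>\<^sub>M borel) (\<lambda>z. (X z, Y z))"
  have XY[measurable]: "(\<lambda>z. (X z, Y z)) \<in> measurable \<pi> (borel \<Otimes>\<^sub>M borel)" by measurable
  have ir: "integrable (distr \<pi> borel Y) f"
    using int by (subst integrable_distr_eq) auto
  have icr: "(\<integral>y. f y \<partial>distr \<pi> borel Y) = c"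
    using ic by (subst integral_distr) auto
  have "\<pi>1 \<in> couplings (distr \<pi> borel X) (distr \<pi> borel Y)"
    unfolding couplings_def \<pi>1_def
  proof (intro CollectI conjI)
    show "prob_space (distr \<pi> (borel \<Otimes>\<^sub>M borel) (\<lambda>z. (X z, Y z)))"
      by (rule prob_space.prob_space_distr[OF ps XY])
    show "sets (distr \<pi> (borel \<Otimes>\<^sub>M borel) (\<lambda>z. (X z, Y z))) = sets (borel \<Otimes>\<^sub>M borel)" by simp
    show "distr (distr \<pi> (borel \<Otimes>\<^sub>M borel) (\<lambda>z. (X z, Y z))) borel fst = distr \<pi> borel X"
      by (subst distr_distr) (auto simp: comp_def)
    show "distr (distr \<pi> (borel \<Otimes>\<^sub>M borel) (\<lambda>z. (X z, Y z))) borel snd = distr \<pi> borel Y"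
      by (subst distr_distr) (auto simp: comp_def)
  qed
  moreover have "transport_cost \<pi>1 \<le> ennreal \<eta>"
    unfolding transport_cost_def \<pi>1_def using cost by (subst nn_integral_distr) auto
  moreover have "AE z in \<pi>1. between (f (snd z)) (f (fst z)) (\<integral>y. f y \<partial>distr \<pi> borel Y)"
    unfolding \<pi>1_def icr
    by (subst AE_distr_iff) (auto intro!: AE_I2 simp: btw[unfolded between_def] between_def)
  ultimately show ?thesis unfolding friendly_def using ir by blast
qed


theorem lemma4p2:
  fixes f :: "'a::euclidean_space \<Rightarrow> real" and p1 p2 :: "'a measure" and \<eta> :: real
  assumes "continuous_on UNIV f"
    and "distribution p1" and "distribution p2"
    and "integrable p1 norm" and "integrable p2 norm"
    and "0 \<le> \<eta>"
    and "W1 p1 p2 < ennreal \<eta>"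
  shows "\<exists>r. distribution r \<and> friendly p1 \<eta> f r \<and> friendly p2 \<eta> f r"
proof -
  note fc = assms(1)
  have fm[measurable]: "f \<in> borel_measurable borel" using fc by (rule borel_measurable_continuous_onI)
  obtain \<pi> where \<pi>: "\<pi> \<in> couplings p1 p2" and c\<pi>: "transport_cost \<pi> < ennreal \<eta>"
    using assms(7) unfolding W1_def by (auto simp: INF_less_iff)
  have ps: "prob_space \<pi>" and sp[measurable_cong]: "sets \<pi> = sets (borel \<Otimes>\<^sub>M borel)"
    and m1: "distr \<pi> borel fst = p1" and m2: "distr \<pi> borel snd = p2"
    using \<pi> unfolding couplings_def by auto
  interpret prob_space \<pi> by (rule ps)
  have [measurable]: "fst \<in> borel_measurable \<pi>" "snd \<in> borel_measurable \<pi>" by measurable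
  obtain d where d: "0 \<le> d" "transport_cost \<pi> = ennreal d"
    using c\<pi> by (cases "transport_cost \<pi>") auto
  have dl: "d < \<eta>" using c\<pi> d by (simp add: ennreal_less_iff)
  have i1: "integrable \<pi> (\<lambda>z. norm (fst z))"
    using assms(4) unfolding m1[symmetric] by (subst (asm) integrable_distr_eq) auto
  have i2: "integrable \<pi> (\<lambda>z. norm (snd z))"
    using assms(5) unfolding m2[symmetric] by (subst (asm) integrable_distr_eq) auto
  define h where "h z = norm (fst z) + norm (snd z)" for z :: "'a \<times> 'a"
  have ih: "integrable \<pi> h" unfolding h_def using i1 i2 by auto
  have [measurable]: "h \<in> borel_measurable \<pi>" unfolding h_def by measurable
  define bad where "bad L = {z. L < \<bar>f (fst z)\<bar> \<or> L < \<bar>f (snd z)\<bar>}" for L :: real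
  have badm[measurable]: "bad L \<in> sets \<pi>" for L
  proof -
    have "bad L = {z \<in> space \<pi>. L < \<bar>f (fst z)\<bar> \<or> L < \<bar>f (snd z)\<bar>}"
      using sets_eq_imp_space_eq[OF sp] by (auto simp: bad_def space_pair_measure)
    also have "\<dots> \<in> sets \<pi>" by measurable
    finally show ?thesis .
  qed
  define s where "s n z = h z * indicator (bad (real n)) z" for n :: nat and z
  have sm[measurable]: "s n \<in> borel_measurable \<pi>" for n unfolding s_def by measurable
  have "(\<lambda>n. integral\<^sup>L \<pi> (s n)) \<longlonglongrightarrow> integral\<^sup>L \<pi> (\<lambda>z. 0)"
  proof (rule integral_dominated_convergence[where w=h])
    show "AE z in \<pi>. (\<lambda>n. s n z) \<longlonglongrightarrow> 0"
    proof (intro AE_I2)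
      fix z
      have "eventually (\<lambda>n. s n z = 0) sequentially"
      proof -
        obtain N :: nat where N: "\<bar>f (fst z)\<bar> + \<bar>f (snd z)\<bar> \<le> real N" using real_arch_simple by blast
        show ?thesis unfolding eventually_sequentially s_def bad_def
        proof (intro exI[of _ N] allI impI)
          fix n assume "N \<le> n"
          then have "real N \<le> real n" by simp
          then show "h z * indicator {z. real n < \<bar>f (fst z)\<bar> \<or> real n < \<bar>f (snd z)\<bar>} z = 0"
            using N by (auto simp: indicator_def)
        qed
      qed
      then show "(\<lambda>n. s n z) \<longlonglongrightarrow> 0" by (rule tendsto_eventually)
    qed
    show "AE z in \<pi>. norm (s n z) \<le> h z" for n
      by (intro AE_I2) (auto simp: s_def h_def indicator_def)
  qed (use ih in auto)
  then have "eventually (\<lambda>n. integral\<^sup>L \<pi> (s n) < \<eta> - d) sequentially"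
    using dl by (intro order_tendstoD(2)) auto
  then obtain N where N: "integral\<^sup>L \<pi> (s N) < \<eta> - d" by (auto simp: eventually_sequentially)
  define L where "L = real N"
  have L0: "0 \<le> L" by (simp add: L_def)
  have isN: "integrable \<pi> (s N)"
    unfolding s_def by (intro integrable_real_mult_indicator ih badm)
  have nnS: "(\<integral>\<^sup>+z. ennreal (s N z) \<partial>\<pi>) \<le> ennreal (\<eta> - d)"
    using N by (subst nn_integral_eq_integral[OF isN]) (auto simp: s_def h_def indicator_def intro!: ennreal_leI)
  define F where "F c z = FF L c (f 0) (f (fst z)) (f (snd z))" for c z
  have Fm[measurable]: "F c \<in> borel_measurable \<pi>" for c
    unfolding F_def FF_def vv_def kap_def by measurable
  have F_lip: "\<bar>F c z - F c' z\<bar> \<le> \<bar>c - c'\<bar>" for c c' z unfolding F_def by (rule FF_lip)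
  have Fi: "integrable \<pi> (F c)" for c
    by (rule integrable_const_bound[where B="\<bar>c\<bar> + \<bar>L\<bar> + \<bar>f 0\<bar>"]) (auto simp: F_def FF_bound)
  define G where "G c = integral\<^sup>L \<pi> (F c)" for c
  have Glip: "dist (G c) (G c') \<le> 1 * dist c c'" for c c'
  proof -
    have "dist (G c) (G c') = \<bar>integral\<^sup>L \<pi> (\<lambda>z. F c z - F c' z)\<bar>"
      unfolding G_def dist_real_def using Bochner_Integration.integral_diff[OF Fi[of c] Fi[of c']] by simp
    also have "\<dots> \<le> integral\<^sup>L \<pi> (\<lambda>z. \<bar>F c z - F c' z\<bar>)"
      by (rule integral_abs_bound)
    also have "\<dots> \<le> integral\<^sup>L \<pi> (\<lambda>z. \<bar>c - c'\<bar>)"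
      by (rule integral_mono) (auto intro!: integrable_abs Bochner_Integration.integrable_diff Fi simp: F_lip)
    also have "\<dots> = \<bar>c - c'\<bar>" by (simp add: prob_space)
    finally show ?thesis by (simp add: dist_real_def)
  qed
  have Gc: "continuous_on UNIV G"
    by (rule lipschitz_on_continuous_on[where L=1]) (use Glip in \<open>auto simp: lipschitz_on_def\<close>)
  define B where "B = L + \<bar>f 0\<bar>"
  have GB: "G B - B \<le> 0"
  proof -
    have "G B \<le> integral\<^sup>L \<pi> (\<lambda>z. B)"
      unfolding G_def by (rule integral_mono) (use Fi L0 in \<open>auto simp: F_def B_def intro!: FF_hi\<close>)
    then show ?thesis by (simp add: prob_space)
  qed
  have GmB: "0 \<le> G (- B) - (- B)"
  proof -
    have "integral\<^sup>L \<pi> (\<lambda>z. - B) \<le> G (- B)"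
      unfolding G_def by (rule integral_mono) (use Fi L0 in \<open>auto simp: F_def B_def intro!: FF_lo\<close>)
    then show ?thesis by (simp add: prob_space)
  qed
  have "- B \<le> B" using L0 by (simp add: B_def)
  moreover have "continuous_on {- B..B} (\<lambda>c. G c - c)"
    by (intro continuous_intros continuous_on_subset[OF Gc]) auto
  ultimately obtain c where Gcc: "G c - c = 0"
    using IVT2'[of "\<lambda>c. G c - c" B 0 "- B"] GB GmB by auto
  define Y where "Y z = sel f (fst z) (snd z) (F c z)" for z
  have Ym[measurable]: "Y \<in> borel_measurable \<pi>"
    unfolding Y_def by (rule sel_meas[OF fc]) measurable
  have fY: "f (Y z) = F c z" for z
    unfolding Y_def by (rule sel_val[OF fc]) (simp add: F_def FF_hull)
  have iY: "integrable \<pi> (\<lambda>z. f (Y z))" using Fi by (simp add: fY)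
  have icY: "(\<integral>z. f (Y z) \<partial>\<pi>) = c" using Gcc by (simp add: fY G_def)
  have dY: "norm (fst z - Y z) \<le> norm (fst z - snd z) + s N z \<and> norm (snd z - Y z) \<le> norm (fst z - snd z) + s N z" for z
  proof -
    have "(if between (F c z) (f (fst z)) (f (snd z)) then 0 else norm (fst z) + norm (snd z)) \<le> s N z"
      using FF_good[of L "f (fst z)" "f (snd z)" c "f 0"]
      by (auto simp: s_def h_def bad_def L_def[symmetric] F_def indicator_def)
    moreover have "norm (fst z - Y z) \<le> norm (fst z - snd z) + (if between (F c z) (f (fst z)) (f (snd z)) then 0 else norm (fst z) + norm (snd z))"
      unfolding Y_def by (rule sel_dist(1))
    moreover have "norm (snd z - Y z) \<le> norm (fst z - snd z) + (if between (F c z) (f (fst z)) (f (snd z)) then 0 else norm (fst z) + norm (snd z))"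
      unfolding Y_def by (rule sel_dist(2))
    ultimately show ?thesis by linarith
  qed
  have costX: "(\<integral>\<^sup>+z. ennreal (norm (X z - Y z)) \<partial>\<pi>) \<le> ennreal \<eta>"
    if X: "X = fst \<or> X = snd" for X
  proof -
    have "(\<integral>\<^sup>+z. ennreal (norm (X z - Y z)) \<partial>\<pi>) \<le> (\<integral>\<^sup>+z. ennreal (norm (fst z - snd z)) + ennreal (s N z) \<partial>\<pi>)"
    proof (intro nn_integral_mono)
      fix z
      have "0 \<le> s N z" by (simp add: s_def h_def)
      moreover have "norm (X z - Y z) \<le> norm (fst z - snd z) + s N z" using X dY[of z] by auto
      ultimately show "ennreal (norm (X z - Y z)) \<le> ennreal (norm (fst z - snd z)) + ennreal (s N z)"
        by (simp add: ennreal_plus[symmetric] ennreal_leI del: ennreal_plus)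
    qed
    also have "\<dots> = transport_cost \<pi> + (\<integral>\<^sup>+z. ennreal (s N z) \<partial>\<pi>)"
      unfolding transport_cost_def by (rule nn_integral_add) auto
    also have "\<dots> \<le> ennreal d + ennreal (\<eta> - d)" using d nnS by (intro add_mono) auto
    also have "\<dots> = ennreal \<eta>" using d dl by (subst ennreal_plus[symmetric]) auto
    finally show ?thesis .
  qed
  have btw: "between (f (Y z)) (f (fst z)) c \<and> between (f (Y z)) (f (snd z)) c" for z
    unfolding fY F_def by (rule FF_between)
  define r where "r = distr \<pi> borel Y"
  have "distribution r"
    unfolding distribution_def r_def by (auto intro!: prob_space_distr)
  moreover have "friendly p1 \<eta> f r"
    unfolding m1[symmetric] r_def
    by (rule friendly_from[OF ps sp _ Ym fm iY icY costX]) (use btw in auto)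
  moreover have "friendly p2 \<eta> f r"
    unfolding m2[symmetric] r_def
    by (rule friendly_from[OF ps sp _ Ym fm iY icY costX]) (use btw in auto)
  ultimately show ?thesis by blast
qed

end
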